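(* Let $(A,\cdot,[\,,\,],\varepsilon)$ be an $F$-manifold color algebra and let $(V,\rho,\mu)$ be a representation of $A$. On the $G$-graded vector space $A\oplus V$ (with $(A\oplus V)_g=A_g\oplus V_g$) define, for homogeneous $x_1+v_1,\,x_2+v_2$ (with $x_i,v_i$ of the same degree as $x_i+v_i$), $$[x_1+v_1,x_2+v_2]_\rho=[x_1,x_2]+\rho(x_1)v_2-\varepsilon(x_1,x_2)\rho(x_2)v_1,$$ $$(x_1+v_1)\cdot_\mu(x_2+v_2)=x_1\cdot x_2+\mu(x_1)v_2+\varepsilon(x_1,x_2)\mu(x_2)v_1,$$ extended bilinearly. Then $(A\oplus V,\cdot_\mu,[\,,\,]_\rho,\varepsilon)$ is an $F$-manifold color algebra.
   Context: $G$ is an abelian group and $\varepsilon:G\times G\to\mathbb K\setminus\{0\}$ is a skew-symmetric bicharacter: $\varepsilon(a,b)\varepsilon(b,a)=1$, $\varepsilon(a,b+c)=\varepsilon(a,b)\varepsilon(a,c)$, $\varepsilon(a+b,c)=\varepsilon(a,c)\varepsilon(b,c)$; $\mathbb K$ is an algebraically closed field of characteristic zero and all spaces are finite-dimensional. For homogeneous elements $x\in A_a,y\in A_b$ one writes $\varepsilon(x,y)$ for $\varepsilon(a,b)$, $\varepsilon(x,y+z)$ for $\varepsilon(a,b+c)$, etc. An $\varepsilon$-commutative associative algebra is a $G$-graded associative algebra $(A,\cdot)$ with $A_a\cdot A_b\subseteq A_{a+b}$ and $x\cdot y=\varepsilon(x,y)y\cdot x$ for homogeneous $x,y$. A Lie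 color algebra is a $G$-graded space $A$ with bilinear $[\,,\,]$ such that $[A_a,A_b]\subseteq A_{a+b}$, $[x,y]=-\varepsilon(x,y)[y,x]$, and $\varepsilon(z,x)[x,[y,z]]+\varepsilon(y,z)[z,[x,y]]+\varepsilon(x,y)[y,[z,x]]=0$ for homogeneous $x,y,z$. An $F$-manifold color algebra is $(A,\cdot,[\,,\,],\varepsilon)$ where $(A,\cdot,\varepsilon)$ is an $\varepsilon$-commutative associative algebra and $(A,[\,,\,],\varepsilon)$ is a Lie color algebra such that for all homogeneous $x,y,z,w$: $P_{x\cdot y}(z,w)=x\cdot P_y(z,w)+\varepsilon(x,y)y\cdot P_x(z,w)$, where $P_x(y,z)=[x,y\cdot z]-[x,y]\cdot z-\varepsilon(x,y)y\cdot[x,z]$. For a $G$-graded space $V$, a representation of the $\varepsilon$-commutative associative algebra $(A,\cdot,\varepsilon)$ is a linear map $\mu:A\to\mathfrak{gl}(V)$ with $\mu(x)V_a\subseteq V_{a+b}$ for $x\in A_b$ and $\mu(x\cdot y)=\mu(x)\mu(y)$; a representation of the Lie color algebra is a linear $\rho:A\to\mathfrak{gl}(V)$ with $\rho(x)V_a\subseteq V_{a+b}$ for $x\in A_b$ and $\rho([x,y])=\rho(x)\rho(y)-\varepsilon(x,y)\rho(y)\rho(x)$. A representation of the $F$-manifold color algebra $A$ is a triple $(V,\rho,\mu)$ where $\rho$ is a representation of the Lie color algebra, $\mu$ a representation of the $\varepsilon$-commutative associative algebra, and for all homogeneous $x_1,x_2,x_3$: $R(x_1\cdot x_2,x_3)=\mu(x_1)R(x_2,x_3)+\varepsilon(x_1,x_2)\mu(x_2)R(x_1,x_3)$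 and $\mu(P_{x_1}(x_2,x_3))=\varepsilon(x_1,x_2+x_3)S(x_2,x_3)\mu(x_1)-\mu(x_1)S(x_2,x_3)$, where $R(x_1,x_2)=\rho(x_1)\mu(x_2)-\varepsilon(x_1,x_2)\mu(x_2)\rho(x_1)-\mu([x_1,x_2])$ and $S(x_1,x_2)=\mu(x_1)\rho(x_2)+\varepsilon(x_1,x_2)\mu(x_2)\rho(x_1)-\rho(x_1\cdot x_2)$. *)

theory Defs
  imports Main "HOL-Library.Product_Plus" "HOL-Computational_Algebra.Polynomial"
begin

definition alg_closed_field :: "'k::field itself \<Rightarrow> bool" where
  "alg_closed_field T \<longleftrightarrow> (\<forall>p::'k poly. 0 < degree p \<longrightarrow> (\<exists>x. poly p x = 0))"

definition skew_bichar :: "('g::ab_group_add \<Rightarrow> 'g \<Rightarrow> 'k::field) \<Rightarrow> bool" where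
  "skew_bichar eps \<longleftrightarrow>
     (\<forall>a b. eps a b \<noteq> 0) \<and>
     (\<forall>a b. eps a b * eps b a = 1) \<and>
     (\<forall>a b c. eps a (b + c) = eps a b * eps a c) \<and>
     (\<forall>a b c. eps (a + b) c = eps a c * eps b c)"

definition is_decomp :: "('g \<Rightarrow> 'v::ab_group_add set) \<Rightarrow> 'v \<Rightarrow> ('g \<Rightarrow> 'v) \<Rightarrow> bool" where
  "is_decomp Vg x f \<longleftrightarrow> finite {g. f g \<noteq> 0} \<and> (\<forall>g. f g \<in> Vg g) \<and> x = sum f {g. f g \<noteq> 0}"

definition graded_vs :: "('k::field \<Rightarrow> 'v::ab_group_add \<Rightarrow> 'v) \<Rightarrow> ('g \<Rightarrow> 'v set) \<Rightarrow> bool" where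
  "graded_vs sc Vg \<longleftrightarrow> vector_space sc \<and> (\<forall>g. module.subspace sc (Vg g)) \<and>
     (\<forall>x. \<exists>!f. is_decomp Vg x f)"

definition fin_dim :: "('k::field \<Rightarrow> 'v::ab_group_add \<Rightarrow> 'v) \<Rightarrow> bool" where
  "fin_dim sc \<longleftrightarrow> (\<exists>B. finite B \<and> module.span sc B = UNIV)"

definition hcomp :: "('g \<Rightarrow> 'v::ab_group_add set) \<Rightarrow> 'v \<Rightarrow> 'g \<Rightarrow> 'v" where
  "hcomp Vg x = (THE f. is_decomp Vg x f)"

definition hsupp :: "('g \<Rightarrow> 'v::ab_group_add set) \<Rightarrow> 'v \<Rightarrow> 'g set" where
  "hsupp Vg x = {g. hcomp Vg x g \<noteq> 0}"

definition bilinear_op :: "('k::field \<Rightarrow> 'a::ab_group_add \<Rightarrow> 'a) \<Rightarrow> ('a \<Rightarrow> 'a \<Rightarrow> 'a) \<Rightarrow> bool" where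
  "bilinear_op sc m \<longleftrightarrow> (\<forall>x. Vector_Spaces.linear sc sc (m x)) \<and> (\<forall>y. Vector_Spaces.linear sc sc (\<lambda>x. m x y))"

definition graded_op :: "('g::ab_group_add \<Rightarrow> 'a set) \<Rightarrow> ('a \<Rightarrow> 'a \<Rightarrow> 'a) \<Rightarrow> bool" where
  "graded_op Ag m \<longleftrightarrow> (\<forall>a b x y. x \<in> Ag a \<longrightarrow> y \<in> Ag b \<longrightarrow> m x y \<in> Ag (a + b))"

definition eps_comm_assoc ::
  "('k::field \<Rightarrow> 'a::ab_group_add \<Rightarrow> 'a) \<Rightarrow> ('g::ab_group_add \<Rightarrow> 'a set) \<Rightarrow> ('g \<Rightarrow> 'g \<Rightarrow> 'k)
   \<Rightarrow> ('a \<Rightarrow> 'a \<Rightarrow> 'a) \<Rightarrow> bool" where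
  "eps_comm_assoc sc Ag eps m \<longleftrightarrow> graded_vs sc Ag \<and> bilinear_op sc m \<and> graded_op Ag m \<and>
     (\<forall>x y z. m (m x y) z = m x (m y z)) \<and>
     (\<forall>a b x y. x \<in> Ag a \<longrightarrow> y \<in> Ag b \<longrightarrow> m x y = sc (eps a b) (m y x))"

definition lie_color ::
  "('k::field \<Rightarrow> 'a::ab_group_add \<Rightarrow> 'a) \<Rightarrow> ('g::ab_group_add \<Rightarrow> 'a set) \<Rightarrow> ('g \<Rightarrow> 'g \<Rightarrow> 'k)
   \<Rightarrow> ('a \<Rightarrow> 'a \<Rightarrow> 'a) \<Rightarrow> bool" where
  "lie_color sc Ag eps br \<longleftrightarrow> graded_vs sc Ag \<and> bilinear_op sc br \<and> graded_op Ag br \<and>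
     (\<forall>a b x y. x \<in> Ag a \<longrightarrow> y \<in> Ag b \<longrightarrow> br x y = - sc (eps a b) (br y x)) \<and>
     (\<forall>a b c x y z. x \<in> Ag a \<longrightarrow> y \<in> Ag b \<longrightarrow> z \<in> Ag c \<longrightarrow>
        sc (eps c a) (br x (br y z)) + sc (eps b c) (br z (br x y)) + sc (eps a b) (br y (br z x)) = 0)"

text \<open>P_x(y,z) = [x, y z] - [x,y] z - eps(x,y) y [x,z], for x of degree a and y of degree b.\<close>
definition Pfun ::
  "('k::field \<Rightarrow> 'a::ab_group_add \<Rightarrow> 'a) \<Rightarrow> ('g \<Rightarrow> 'g \<Rightarrow> 'k) \<Rightarrow> ('a \<Rightarrow> 'a \<Rightarrow> 'a) \<Rightarrow> ('a \<Rightarrow> 'a \<Rightarrow> 'a)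
   \<Rightarrow> 'g \<Rightarrow> 'g \<Rightarrow> 'a \<Rightarrow> 'a \<Rightarrow> 'a \<Rightarrow> 'a" where
  "Pfun sc eps m br a b x y z = br x (m y z) - m (br x y) z - sc (eps a b) (m y (br x z))"

definition F_manifold_color ::
  "('k::field \<Rightarrow> 'a::ab_group_add \<Rightarrow> 'a) \<Rightarrow> ('g::ab_group_add \<Rightarrow> 'a set) \<Rightarrow> ('g \<Rightarrow> 'g \<Rightarrow> 'k)
   \<Rightarrow> ('a \<Rightarrow> 'a \<Rightarrow> 'a) \<Rightarrow> ('a \<Rightarrow> 'a \<Rightarrow> 'a) \<Rightarrow> bool" where
  "F_manifold_color sc Ag eps m br \<longleftrightarrow> eps_comm_assoc sc Ag eps m \<and> lie_color sc Ag eps br \<and>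
     (\<forall>a b c x y z w. x \<in> Ag a \<longrightarrow> y \<in> Ag b \<longrightarrow> z \<in> Ag c \<longrightarrow>
        Pfun sc eps m br (a + b) c (m x y) z w =
          m x (Pfun sc eps m br b c y z w) + sc (eps a b) (m y (Pfun sc eps m br a c x z w)))"

definition graded_action ::
  "('g::ab_group_add \<Rightarrow> 'a set) \<Rightarrow> ('g \<Rightarrow> 'v set) \<Rightarrow> ('a \<Rightarrow> 'v \<Rightarrow> 'v) \<Rightarrow> bool" where
  "graded_action Ag Vg r \<longleftrightarrow> (\<forall>a b x v. x \<in> Ag b \<longrightarrow> v \<in> Vg a \<longrightarrow> r x v \<in> Vg (a + b))"

definition linear_action ::
  "('k::field \<Rightarrow> 'a::ab_group_add \<Rightarrow> 'a) \<Rightarrow> ('k \<Rightarrow> 'v::ab_group_add \<Rightarrow> 'v) \<Rightarrow> ('a \<Rightarrow> 'v \<Rightarrow> 'v) \<Rightarrow> bool" where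
  "linear_action sc scV r \<longleftrightarrow> (\<forall>x. Vector_Spaces.linear scV scV (r x)) \<and>
     (\<forall>x y v. r (x + y) v = r x v + r y v) \<and> (\<forall>c x v. r (sc c x) v = scV c (r x v))"

text \<open>R(x1,x2) and S(x1,x2) from the paper, for x1 of degree a and x2 of degree b.\<close>
definition Rop ::
  "('k \<Rightarrow> 'v::ab_group_add \<Rightarrow> 'v) \<Rightarrow> ('g \<Rightarrow> 'g \<Rightarrow> 'k) \<Rightarrow> ('a \<Rightarrow> 'a \<Rightarrow> 'a) \<Rightarrow> ('a \<Rightarrow> 'v \<Rightarrow> 'v)
   \<Rightarrow> ('a \<Rightarrow> 'v \<Rightarrow> 'v) \<Rightarrow> 'g \<Rightarrow> 'g \<Rightarrow> 'a \<Rightarrow> 'a \<Rightarrow> 'v \<Rightarrow> 'v" where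
  "Rop scV eps br rho mu a b x1 x2 v =
     rho x1 (mu x2 v) - scV (eps a b) (mu x2 (rho x1 v)) - mu (br x1 x2) v"

definition Sop ::
  "('k \<Rightarrow> 'v::ab_group_add \<Rightarrow> 'v) \<Rightarrow> ('g \<Rightarrow> 'g \<Rightarrow> 'k) \<Rightarrow> ('a \<Rightarrow> 'a \<Rightarrow> 'a) \<Rightarrow> ('a \<Rightarrow> 'v \<Rightarrow> 'v)
   \<Rightarrow> ('a \<Rightarrow> 'v \<Rightarrow> 'v) \<Rightarrow> 'g \<Rightarrow> 'g \<Rightarrow> 'a \<Rightarrow> 'a \<Rightarrow> 'v \<Rightarrow> 'v" where
  "Sop scV eps m rho mu a b x1 x2 v =
     mu x1 (rho x2 v) + scV (eps a b) (mu x2 (rho x1 v)) - rho (m x1 x2) v"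

definition F_manifold_color_rep ::
  "('k::field \<Rightarrow> 'a::ab_group_add \<Rightarrow> 'a) \<Rightarrow> ('g::ab_group_add \<Rightarrow> 'a set) \<Rightarrow> ('g \<Rightarrow> 'g \<Rightarrow> 'k)
   \<Rightarrow> ('a \<Rightarrow> 'a \<Rightarrow> 'a) \<Rightarrow> ('a \<Rightarrow> 'a \<Rightarrow> 'a)
   \<Rightarrow> ('k \<Rightarrow> 'v::ab_group_add \<Rightarrow> 'v) \<Rightarrow> ('g \<Rightarrow> 'v set) \<Rightarrow> ('a \<Rightarrow> 'v \<Rightarrow> 'v) \<Rightarrow> ('a \<Rightarrow> 'v \<Rightarrow> 'v) \<Rightarrow> bool" where
  "F_manifold_color_rep sc Ag eps m br scV Vg rho mu \<longleftrightarrow>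
     graded_vs scV Vg \<and>
     linear_action sc scV rho \<and> graded_action Ag Vg rho \<and>
     linear_action sc scV mu \<and> graded_action Ag Vg mu \<and>
     (\<forall>a b x y. x \<in> Ag a \<longrightarrow> y \<in> Ag b \<longrightarrow>
        (\<forall>v. rho (br x y) v = rho x (rho y v) - scV (eps a b) (rho y (rho x v)))) \<and>
     (\<forall>x y v. mu (m x y) v = mu x (mu y v)) \<and>
     (\<forall>a b c x1 x2 x3 v. x1 \<in> Ag a \<longrightarrow> x2 \<in> Ag b \<longrightarrow> x3 \<in> Ag c \<longrightarrow>
        Rop scV eps br rho mu (a + b) c (m x1 x2) x3 v =
          mu x1 (Rop scV eps br rho mu b c x2 x3 v) + scV (eps a b) (mu x2 (Rop scV eps br rho mu a c x1 x3 v))) \<and>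
     (\<forall>a b c x1 x2 x3 v. x1 \<in> Ag a \<longrightarrow> x2 \<in> Ag b \<longrightarrow> x3 \<in> Ag c \<longrightarrow>
        mu (Pfun sc eps m br a b x1 x2 x3) v =
          scV (eps a (b + c)) (Sop scV eps m rho mu b c x2 x3 (mu x1 v)) - mu x1 (Sop scV eps m rho mu b c x2 x3 v))"

definition sum_scale :: "('k \<Rightarrow> 'a \<Rightarrow> 'a) \<Rightarrow> ('k \<Rightarrow> 'v \<Rightarrow> 'v) \<Rightarrow> 'k \<Rightarrow> 'a \<times> 'v \<Rightarrow> 'a \<times> 'v" where
  "sum_scale sc scV c p = (sc c (fst p), scV c (snd p))"

definition sum_grading :: "('g \<Rightarrow> 'a set) \<Rightarrow> ('g \<Rightarrow> 'v set) \<Rightarrow> 'g \<Rightarrow> ('a \<times> 'v) set" where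
  "sum_grading Ag Vg g = Ag g \<times> Vg g"

text \<open>Bilinear extension of (x2, v1) |-> eps(v1, x2) op(x2) v1 (degrees of homogeneous components).\<close>
definition twist ::
  "('k \<Rightarrow> 'v::ab_group_add \<Rightarrow> 'v) \<Rightarrow> ('g \<Rightarrow> 'a::ab_group_add set) \<Rightarrow> ('g \<Rightarrow> 'v set) \<Rightarrow> ('g \<Rightarrow> 'g \<Rightarrow> 'k)
   \<Rightarrow> ('a \<Rightarrow> 'v \<Rightarrow> 'v) \<Rightarrow> 'a \<Rightarrow> 'v \<Rightarrow> 'v" where
  "twist scV Ag Vg eps op x2 v1 =
     (\<Sum>a\<in>hsupp Vg v1. \<Sum>b\<in>hsupp Ag x2. scV (eps a b) (op (hcomp Ag x2 b) (hcomp Vg v1 a)))"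

definition semidirect_br ::
  "('k \<Rightarrow> 'v::ab_group_add \<Rightarrow> 'v) \<Rightarrow> ('g \<Rightarrow> 'a::ab_group_add set) \<Rightarrow> ('g \<Rightarrow> 'v set) \<Rightarrow> ('g \<Rightarrow> 'g \<Rightarrow> 'k)
   \<Rightarrow> ('a \<Rightarrow> 'a \<Rightarrow> 'a) \<Rightarrow> ('a \<Rightarrow> 'v \<Rightarrow> 'v) \<Rightarrow> 'a \<times> 'v \<Rightarrow> 'a \<times> 'v \<Rightarrow> 'a \<times> 'v" where
  "semidirect_br scV Ag Vg eps br rho p q =
     (br (fst p) (fst q), rho (fst p) (snd q) - twist scV Ag Vg eps rho (fst q) (snd p))"

definition semidirect_mul ::
  "('k \<Rightarrow> 'v::ab_group_add \<Rightarrow> 'v) \<Rightarrow> ('g \<Rightarrow> 'a::ab_group_add set) \<Rightarrow> ('g \<Rightarrow> 'v set) \<Rightarrow> ('g \<Rightarrow> 'g \<Rightarrow> 'k)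
   \<Rightarrow> ('a \<Rightarrow> 'a \<Rightarrow> 'a) \<Rightarrow> ('a \<Rightarrow> 'v \<Rightarrow> 'v) \<Rightarrow> 'a \<times> 'v \<Rightarrow> 'a \<times> 'v \<Rightarrow> 'a \<times> 'v" where
  "semidirect_mul scV Ag Vg eps m mu p q =
     (m (fst p) (fst q), mu (fst p) (snd q) + twist scV Ag Vg eps mu (fst q) (snd p))"

end

theory Submission
  imports Defs
begin



locale gvs =
  fixes s :: "'k::field \<Rightarrow> 'v::ab_group_add \<Rightarrow> 'v" and Vg :: "'g \<Rightarrow> 'v set"
  assumes gv: "graded_vs s Vg"
begin

sublocale vector_space s using gv by (simp add: graded_vs_def)

lemma sub: "subspace (Vg g)" using gv by (simp add: graded_vs_def)

lemma in0[simp]: "0 \<in> Vg g" using sub subspace_0 by blast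
lemma inadd: "x \<in> Vg g \<Longrightarrow> y \<in> Vg g \<Longrightarrow> x + y \<in> Vg g" using sub subspace_add by blast
lemma inscale: "x \<in> Vg g \<Longrightarrow> s c x \<in> Vg g" using sub subspace_scale by blast
lemma inneg: "x \<in> Vg g \<Longrightarrow> - x \<in> Vg g" using sub subspace_neg by blast
lemma indiff: "x \<in> Vg g \<Longrightarrow> y \<in> Vg g \<Longrightarrow> x - y \<in> Vg g" using sub subspace_diff by blast

lemma ex1: "\<exists>!f. is_decomp Vg x f" using gv by (simp add: graded_vs_def)

lemma decomp_hcomp: "is_decomp Vg x (hcomp Vg x)"
  unfolding hcomp_def using ex1 by (rule theI')

lemma hcomp_unique: "is_decomp Vg x f \<Longrightarrow> hcomp Vg x = f"
  using ex1 decomp_hcomp by blast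

lemma decomp_intro:
  assumes "finite S" "\<And>g. g \<notin> S \<Longrightarrow> f g = 0" "\<And>g. f g \<in> Vg g" "x = sum f S"
  shows "is_decomp Vg x f"
proof -
  have sub: "{g. f g \<noteq> 0} \<subseteq> S" using assms(2) by blast
  have "finite {g. f g \<noteq> 0}" using sub assms(1) finite_subset by blast
  moreover have "sum f S = sum f {g. f g \<noteq> 0}"
    by (rule sum.mono_neutral_right[OF assms(1) sub]) auto
  ultimately show ?thesis using assms unfolding is_decomp_def by auto
qed

lemma hsupp_finite: "finite (hsupp Vg x)"
  using decomp_hcomp unfolding is_decomp_def hsupp_def by auto

lemma hcomp_in: "hcomp Vg x g \<in> Vg g"
  using decomp_hcomp unfolding is_decomp_def by auto

lemma hcomp_out: "g \<notin> hsupp Vg x \<Longrightarrow> hcomp Vg x g = 0"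
  unfolding hsupp_def by auto

lemma hcomp_sum:
  assumes "finite S" "hsupp Vg x \<subseteq> S"
  shows "x = sum (hcomp Vg x) S"
proof -
  have "x = sum (hcomp Vg x) (hsupp Vg x)"
    using decomp_hcomp unfolding is_decomp_def hsupp_def by auto
  also have "\<dots> = sum (hcomp Vg x) S"
    by (rule sum.mono_neutral_left[OF assms(1) assms(2)]) (auto simp: hsupp_def)
  finally show ?thesis .
qed

lemma hcomp_add: "hcomp Vg (x + y) = (\<lambda>g. hcomp Vg x g + hcomp Vg y g)"
proof (rule hcomp_unique, rule decomp_intro)
  let ?S = "hsupp Vg x \<union> hsupp Vg y"
  show "finite ?S" using hsupp_finite by auto
  show "\<And>g. g \<notin> ?S \<Longrightarrow> hcomp Vg x g + hcomp Vg y g = 0" by (auto simp: hsupp_def)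
  show "\<And>g. hcomp Vg x g + hcomp Vg y g \<in> Vg g" by (simp add: hcomp_in inadd)
  have "x = sum (hcomp Vg x) ?S" "y = sum (hcomp Vg y) ?S"
    by (rule hcomp_sum; use hsupp_finite in auto)+
  then show "x + y = (\<Sum>g\<in>?S. hcomp Vg x g + hcomp Vg y g)"
    by (simp add: sum.distrib)
qed

lemma hcomp_scale: "hcomp Vg (s c x) = (\<lambda>g. s c (hcomp Vg x g))"
proof (rule hcomp_unique, rule decomp_intro)
  let ?S = "hsupp Vg x"
  show "finite ?S" using hsupp_finite by auto
  show "\<And>g. g \<notin> ?S \<Longrightarrow> s c (hcomp Vg x g) = 0" by (auto simp: hsupp_def)
  show "\<And>g. s c (hcomp Vg x g) \<in> Vg g" by (simp add: hcomp_in inscale)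
  have "x = sum (hcomp Vg x) ?S"
    by (rule hcomp_sum; use hsupp_finite in auto)
  then show "s c x = (\<Sum>g\<in>?S. s c (hcomp Vg x g))"
    by (metis scale_sum_right)
qed

lemma hcomp_hom: "x \<in> Vg a \<Longrightarrow> hcomp Vg x = (\<lambda>g. if g = a then x else 0)"
  by (rule hcomp_unique, rule decomp_intro[where S="{a}"]) auto

lemma hcomp_zero: "hcomp Vg 0 = (\<lambda>g. 0)"
  using hcomp_hom[OF in0[of undefined]] by auto

lemma hsupp_zero[simp]: "hsupp Vg 0 = {}"
  by (simp add: hsupp_def hcomp_zero)

lemma hsupp_hom: "x \<in> Vg a \<Longrightarrow> hsupp Vg x \<subseteq> {a}"
  by (auto simp: hsupp_def hcomp_hom split: if_splits)

end




lemma linI: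
  assumes "vector_space s1" "vector_space s2" "\<And>x y. f (x + y) = f x + f y" "\<And>c x. f (s1 c x) = s2 c (f x)"
  shows "Vector_Spaces.linear s1 s2 f"
  using assms unfolding Vector_Spaces.linear_def module_hom_def module_hom_axioms_def module_iff_vector_space
  by auto

locale smc = A: gvs sc Ag + V: gvs scV Vg
  for sc :: "'k::field \<Rightarrow> 'a::ab_group_add \<Rightarrow> 'a" and Ag :: "'g::ab_group_add \<Rightarrow> 'a set"
  and scV :: "'k \<Rightarrow> 'v::ab_group_add \<Rightarrow> 'v" and Vg :: "'g \<Rightarrow> 'v set" +
  fixes eps :: "'g \<Rightarrow> 'g \<Rightarrow> 'k" and m br :: "'a \<Rightarrow> 'a \<Rightarrow> 'a" and rho mu :: "'a \<Rightarrow> 'v \<Rightarrow> 'v"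
  assumes sk: "skew_bichar eps" and FA: "F_manifold_color sc Ag eps m br"
  and FR: "F_manifold_color_rep sc Ag eps m br scV Vg rho mu"
begin

lemma eps_nz: "eps a b \<noteq> 0" using sk by (simp add: skew_bichar_def)
lemma eps_swap: "eps a b * eps b a = 1" using sk by (simp add: skew_bichar_def)
lemma epsR: "eps a (b + c) = eps a b * eps a c" using sk by (simp add: skew_bichar_def)
lemma epsL: "eps (a + b) c = eps a c * eps b c" using sk by (simp add: skew_bichar_def)
lemma eps_inv: "eps b a = inverse (eps a b)"
  using eps_swap[of a b] eps_nz[of a b] by (simp add: field_simps)

lemma bil_facts:
  assumes "bilinear_op sc f"
  shows "f x (y + z) = f x y + f x z" "f (x + y) z = f x z + f y z"
    "f x (sc c y) = sc c (f x y)" "f (sc c x) y = sc c (f x y)"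
    "f x 0 = 0" "f 0 y = 0" "f x (- y) = - f x y" "f (- x) y = - f x y"
    "f x (y - z) = f x y - f x z" "f (x - y) z = f x z - f y z"
proof -
  have l1: "module_hom sc sc (f x)" for x using assms by (simp add: bilinear_op_def module_hom_iff_linear)
  have l2: "module_hom sc sc (\<lambda>x. f x y)" for y using assms by (simp add: bilinear_op_def module_hom_iff_linear)
  show "f x (y + z) = f x y + f x z" by (rule module_hom.add[OF l1])
  show "f (x + y) z = f x z + f y z" using module_hom.add[OF l2] by simp
  show "f x (sc c y) = sc c (f x y)" by (rule module_hom.scale[OF l1])
  show "f (sc c x) y = sc c (f x y)" using module_hom.scale[OF l2] by simp
  show "f x 0 = 0" by (rule module_hom.zero[OF l1])
  show "f 0 y = 0" using module_hom.zero[OF l2] by simp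
  show "f x (- y) = - f x y" by (rule module_hom.neg[OF l1])
  show "f (- x) y = - f x y" using module_hom.neg[OF l2] by simp
  show "f x (y - z) = f x y - f x z" by (rule module_hom.diff[OF l1])
  show "f (x - y) z = f x z - f y z" using module_hom.diff[OF l2] by simp
qed

lemma la_facts:
  assumes "linear_action sc scV r"
  shows "r x (v + w) = r x v + r x w" "r x (scV c v) = scV c (r x v)" "r x 0 = 0"
    "r x (- v) = - r x v" "r x (v - w) = r x v - r x w"
    "r (x + y) v = r x v + r y v" "r (sc c x) v = scV c (r x v)" "r 0 v = 0"
    "r (- x) v = - r x v" "r (x - y) v = r x v - r y v"
proof -
  have l1: "module_hom scV scV (r x)" for x using assms by (simp add: linear_action_def module_hom_iff_linear)
  have ad: "r (x + y) v = r x v + r y v" for x y v using assms by (simp add: linear_action_def)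
  show "r x (v + w) = r x v + r x w" by (rule module_hom.add[OF l1])
  show "r x (scV c v) = scV c (r x v)" by (rule module_hom.scale[OF l1])
  show "r x 0 = 0" by (rule module_hom.zero[OF l1])
  show "r x (- v) = - r x v" by (rule module_hom.neg[OF l1])
  show "r x (v - w) = r x v - r x w" by (rule module_hom.diff[OF l1])
  show "r (x + y) v = r x v + r y v" by (rule ad)
  show "r (sc c x) v = scV c (r x v)" using assms by (simp add: linear_action_def)
  have z: "r 0 v = 0" for v using ad[of 0 0 v] by simp
  show "r 0 v = 0" by (rule z)
  have n: "r (- x) v = - r x v" for x using ad[of x "-x" v] z[of v] by (simp add: eq_neg_iff_add_eq_0 add.commute)
  show "r (- x) v = - r x v" by (rule n)
  show "r (x - y) v = r x v - r y v" using ad[of x "-y" v] n[of y] by simp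
qed

lemma FRp1: "graded_vs scV Vg"
  using FR[unfolded F_manifold_color_rep_def] by (elim conjE) assumption
lemma FRp2: "linear_action sc scV rho"
  using FR[unfolded F_manifold_color_rep_def] by (elim conjE) assumption
lemma FRp3: "graded_action Ag Vg rho"
  using FR[unfolded F_manifold_color_rep_def] by (elim conjE) assumption
lemma FRp4: "linear_action sc scV mu"
  using FR[unfolded F_manifold_color_rep_def] by (elim conjE) assumption
lemma FRp5: "graded_action Ag Vg mu"
  using FR[unfolded F_manifold_color_rep_def] by (elim conjE) assumption
lemma FRp6: "(\<forall>a b x y. x \<in> Ag a \<longrightarrow> y \<in> Ag b \<longrightarrow>
        (\<forall>v. rho (br x y) v = rho x (rho y v) - scV (eps a b) (rho y (rho x v))))"
  using FR[unfolded F_manifold_color_rep_def] by (elim conjE) assumption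
lemma FRp7: "(\<forall>x y v. mu (m x y) v = mu x (mu y v))"
  using FR[unfolded F_manifold_color_rep_def] by (elim conjE) assumption
lemma FRp8: "(\<forall>a b c x1 x2 x3 v. x1 \<in> Ag a \<longrightarrow> x2 \<in> Ag b \<longrightarrow> x3 \<in> Ag c \<longrightarrow>
        Rop scV eps br rho mu (a + b) c (m x1 x2) x3 v =
          mu x1 (Rop scV eps br rho mu b c x2 x3 v) + scV (eps a b) (mu x2 (Rop scV eps br rho mu a c x1 x3 v)))"
  using FR[unfolded F_manifold_color_rep_def] by (elim conjE) assumption
lemma FRp9: "(\<forall>a b c x1 x2 x3 v. x1 \<in> Ag a \<longrightarrow> x2 \<in> Ag b \<longrightarrow> x3 \<in> Ag c \<longrightarrow>
        mu (Pfun sc eps m br a b x1 x2 x3) v =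
          scV (eps a (b + c)) (Sop scV eps m rho mu b c x2 x3 (mu x1 v)) - mu x1 (Sop scV eps m rho mu b c x2 x3 v))"
  using FR[unfolded F_manifold_color_rep_def] by (elim conjE) assumption
lemmas FRp = FRp1 FRp2 FRp3 FRp4 FRp5 FRp6 FRp7 FRp8 FRp9

lemma FAp1: "eps_comm_assoc sc Ag eps m"
  using FA[unfolded F_manifold_color_def] by (elim conjE) assumption
lemma FAp2: "lie_color sc Ag eps br"
  using FA[unfolded F_manifold_color_def] by (elim conjE) assumption
lemma FAp3: "(\<forall>a b c x y z w. x \<in> Ag a \<longrightarrow> y \<in> Ag b \<longrightarrow> z \<in> Ag c \<longrightarrow>
        Pfun sc eps m br (a + b) c (m x y) z w =
          m x (Pfun sc eps m br b c y z w) + sc (eps a b) (m y (Pfun sc eps m br a c x z w)))"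
  using FA[unfolded F_manifold_color_def] by (elim conjE) assumption
lemmas FAp = FAp1 FAp2 FAp3

lemma ECp1: "graded_vs sc Ag"
  using FAp(1)[unfolded eps_comm_assoc_def] by (elim conjE) assumption
lemma ECp2: "bilinear_op sc m"
  using FAp(1)[unfolded eps_comm_assoc_def] by (elim conjE) assumption
lemma ECp3: "graded_op Ag m"
  using FAp(1)[unfolded eps_comm_assoc_def] by (elim conjE) assumption
lemma ECp4: "(\<forall>x y z. m (m x y) z = m x (m y z))"
  using FAp(1)[unfolded eps_comm_assoc_def] by (elim conjE) assumption
lemma ECp5: "(\<forall>a b x y. x \<in> Ag a \<longrightarrow> y \<in> Ag b \<longrightarrow> m x y = sc (eps a b) (m y x))"
  using FAp(1)[unfolded eps_comm_assoc_def] by (elim conjE) assumption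
lemmas ECp = ECp1 ECp2 ECp3 ECp4 ECp5

lemma LCp1: "graded_vs sc Ag"
  using FAp(2)[unfolded lie_color_def] by (elim conjE) assumption
lemma LCp2: "bilinear_op sc br"
  using FAp(2)[unfolded lie_color_def] by (elim conjE) assumption
lemma LCp3: "graded_op Ag br"
  using FAp(2)[unfolded lie_color_def] by (elim conjE) assumption
lemma LCp4: "(\<forall>a b x y. x \<in> Ag a \<longrightarrow> y \<in> Ag b \<longrightarrow> br x y = - sc (eps a b) (br y x))"
  using FAp(2)[unfolded lie_color_def] by (elim conjE) assumption
lemma LCp5: "(\<forall>a b c x y z. x \<in> Ag a \<longrightarrow> y \<in> Ag b \<longrightarrow> z \<in> Ag c \<longrightarrow>
        sc (eps c a) (br x (br y z)) + sc (eps b c) (br z (br x y)) + sc (eps a b) (br y (br z x)) = 0)"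
  using FAp(2)[unfolded lie_color_def] by (elim conjE) assumption
lemmas LCp = LCp1 LCp2 LCp3 LCp4 LCp5

lemma m_bil: "bilinear_op sc m" and br_bil: "bilinear_op sc br"
  by (rule ECp(2), rule LCp(2))

lemmas m_facts = bil_facts[OF m_bil] and br_facts = bil_facts[OF br_bil]

lemma rho_la: "linear_action sc scV rho" and mu_la: "linear_action sc scV mu"
  by (rule FRp(2), rule FRp(4))

lemmas rho_facts = la_facts[OF rho_la] and mu_facts = la_facts[OF mu_la]

lemma m_gr: "x \<in> Ag a \<Longrightarrow> y \<in> Ag b \<Longrightarrow> m x y \<in> Ag (a + b)"
  using ECp(3) unfolding graded_op_def by blast
lemma br_gr: "x \<in> Ag a \<Longrightarrow> y \<in> Ag b \<Longrightarrow> br x y \<in> Ag (a + b)"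
  using LCp(3) unfolding graded_op_def by blast
lemma rho_gr: "x \<in> Ag b \<Longrightarrow> v \<in> Vg a \<Longrightarrow> rho x v \<in> Vg (a + b)"
  using FRp(3) unfolding graded_action_def by blast
lemma mu_gr: "x \<in> Ag b \<Longrightarrow> v \<in> Vg a \<Longrightarrow> mu x v \<in> Vg (a + b)"
  using FRp(5) unfolding graded_action_def by blast

lemma m_assoc: "m (m x y) z = m x (m y z)"
  using ECp(4) by blast
lemma m_comm: "x \<in> Ag a \<Longrightarrow> y \<in> Ag b \<Longrightarrow> m x y = sc (eps a b) (m y x)"
  using ECp(5) by blast
lemma br_anti: "x \<in> Ag a \<Longrightarrow> y \<in> Ag b \<Longrightarrow> br x y = - sc (eps a b) (br y x)"
  using LCp(4) by blast
lemma br_jac: "x \<in> Ag a \<Longrightarrow> y \<in> Ag b \<Longrightarrow> z \<in> Ag c \<Longrightarrow>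
   sc (eps c a) (br x (br y z)) + sc (eps b c) (br z (br x y)) + sc (eps a b) (br y (br z x)) = 0"
  using LCp(5) by blast
lemma FA_id: "x \<in> Ag a \<Longrightarrow> y \<in> Ag b \<Longrightarrow> z \<in> Ag c \<Longrightarrow>
        Pfun sc eps m br (a + b) c (m x y) z w =
          m x (Pfun sc eps m br b c y z w) + sc (eps a b) (m y (Pfun sc eps m br a c x z w))"
  using FAp(3) by blast
lemma rho_rep: "x \<in> Ag a \<Longrightarrow> y \<in> Ag b \<Longrightarrow> rho (br x y) v = rho x (rho y v) - scV (eps a b) (rho y (rho x v))"
  using FRp(6) by blast
lemma mu_mult: "mu (m x y) v = mu x (mu y v)"
  using FRp(7) by blast
lemma R_ax: "x1 \<in> Ag a \<Longrightarrow> x2 \<in> Ag b \<Longrightarrow> x3 \<in> Ag c \<Longrightarrow>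
        Rop scV eps br rho mu (a + b) c (m x1 x2) x3 v =
          mu x1 (Rop scV eps br rho mu b c x2 x3 v) + scV (eps a b) (mu x2 (Rop scV eps br rho mu a c x1 x3 v))"
  using FRp(8) by blast
lemma P_ax: "x1 \<in> Ag a \<Longrightarrow> x2 \<in> Ag b \<Longrightarrow> x3 \<in> Ag c \<Longrightarrow>
        mu (Pfun sc eps m br a b x1 x2 x3) v =
          scV (eps a (b + c)) (Sop scV eps m rho mu b c x2 x3 (mu x1 v)) - mu x1 (Sop scV eps m rho mu b c x2 x3 v)"
  using FRp(9) by blast

lemma mu_comm: "x \<in> Ag a \<Longrightarrow> z \<in> Ag c \<Longrightarrow> mu x (mu z v) = scV (eps a c) (mu z (mu x v))"
  proof -
  assume "x \<in> Ag a" "z \<in> Ag c"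
  then have "mu x (mu z v) = mu (sc (eps a c) (m z x)) v" using m_comm mu_mult by metis
  then show ?thesis by (simp add: mu_facts mu_mult)
qed

lemma twist_sum:
  assumes la: "linear_action sc scV r" and fin: "finite S" "finite T"
    and sub: "hsupp Vg v \<subseteq> S" "hsupp Ag x \<subseteq> T"
  shows "twist scV Ag Vg eps r x v = (\<Sum>a\<in>S. \<Sum>b\<in>T. scV (eps a b) (r (hcomp Ag x b) (hcomp Vg v a)))"
proof -
  note lf = la_facts[OF la]
  have inner: "(\<Sum>b\<in>hsupp Ag x. scV (eps a b) (r (hcomp Ag x b) (hcomp Vg v a)))
      = (\<Sum>b\<in>T. scV (eps a b) (r (hcomp Ag x b) (hcomp Vg v a)))" for a
    by (rule sum.mono_neutral_left[OF fin(2) sub(2)]) (auto simp: hsupp_def lf)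
  have "twist scV Ag Vg eps r x v = (\<Sum>a\<in>hsupp Vg v. \<Sum>b\<in>T. scV (eps a b) (r (hcomp Ag x b) (hcomp Vg v a)))"
    unfolding twist_def using inner by simp
  also have "\<dots> = (\<Sum>a\<in>S. \<Sum>b\<in>T. scV (eps a b) (r (hcomp Ag x b) (hcomp Vg v a)))"
    by (rule sum.mono_neutral_left[OF fin(1) sub(1)]) (auto simp: hsupp_def lf)
  finally show ?thesis .
qed

lemma twist_add1:
  assumes la: "linear_action sc scV r"
  shows "twist scV Ag Vg eps r (x + y) v = twist scV Ag Vg eps r x v + twist scV Ag Vg eps r y v"
proof -
  note lf = la_facts[OF la]
  let ?T = "hsupp Ag x \<union> hsupp Ag y \<union> hsupp Ag (x + y)" and ?S = "hsupp Vg v"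
  have f: "finite ?T" "finite ?S" using A.hsupp_finite V.hsupp_finite by auto
  show ?thesis
    apply (subst (1 2 3) twist_sum[OF la f(2) f(1)])
    by (auto simp add: A.hcomp_add lf V.scale_right_distrib sum.distrib)
qed

lemma twist_add2:
  assumes la: "linear_action sc scV r"
  shows "twist scV Ag Vg eps r x (u + v) = twist scV Ag Vg eps r x u + twist scV Ag Vg eps r x v"
proof -
  note lf = la_facts[OF la]
  let ?S = "hsupp Vg u \<union> hsupp Vg v \<union> hsupp Vg (u + v)" and ?T = "hsupp Ag x"
  have f: "finite ?T" "finite ?S" using A.hsupp_finite V.hsupp_finite by auto
  show ?thesis
    apply (subst (1 2 3) twist_sum[OF la f(2) f(1)])
    by (auto simp add: V.hcomp_add lf V.scale_right_distrib sum.distrib)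
qed

lemma twist_scale1:
  assumes la: "linear_action sc scV r"
  shows "twist scV Ag Vg eps r (sc c x) v = scV c (twist scV Ag Vg eps r x v)"
proof -
  note lf = la_facts[OF la]
  let ?T = "hsupp Ag x \<union> hsupp Ag (sc c x)" and ?S = "hsupp Vg v"
  have f: "finite ?T" "finite ?S" using A.hsupp_finite V.hsupp_finite by auto
  show ?thesis
    apply (subst (1 2) twist_sum[OF la f(2) f(1)])
    by (auto simp add: A.hcomp_scale lf V.scale_sum_right V.scale_scale mult.commute)
qed

lemma twist_scale2:
  assumes la: "linear_action sc scV r"
  shows "twist scV Ag Vg eps r x (scV c v) = scV c (twist scV Ag Vg eps r x v)"
proof -
  note lf = la_facts[OF la]
  let ?S = "hsupp Vg v \<union> hsupp Vg (scV c v)" and ?T = "hsupp Ag x"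
  have f: "finite ?T" "finite ?S" using A.hsupp_finite V.hsupp_finite by auto
  show ?thesis
    apply (subst (1 2) twist_sum[OF la f(2) f(1)])
    by (auto simp add: V.hcomp_scale lf V.scale_sum_right V.scale_scale mult.commute)
qed

lemma twist_zero1[simp]: "twist scV Ag Vg eps r 0 v = 0"
  by (simp add: twist_def hsupp_def A.hcomp_zero)
lemma twist_zero2[simp]: "twist scV Ag Vg eps r x 0 = 0"
  by (simp add: twist_def)

lemma twist_hom:
  assumes la: "linear_action sc scV r" and x: "x \<in> Ag b" and v: "v \<in> Vg a"
  shows "twist scV Ag Vg eps r x v = scV (eps a b) (r x v)"
  apply (subst twist_sum[OF la _ _ V.hsupp_hom[OF v] A.hsupp_hom[OF x]])
  by (auto simp: A.hcomp_hom[OF x] V.hcomp_hom[OF v])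

end



context smc begin

abbreviation "SS \<equiv> sum_scale sc scV"
abbreviation "SG \<equiv> sum_grading Ag Vg"
abbreviation "MM \<equiv> semidirect_mul scV Ag Vg eps m mu"
abbreviation "BB \<equiv> semidirect_br scV Ag Vg eps br rho"
abbreviation "tw \<equiv> twist scV Ag Vg eps"

lemma vs_SS: "vector_space SS"
  unfolding vector_space_def sum_scale_def
  by (auto simp: A.scale_right_distrib V.scale_right_distrib A.scale_left_distrib V.scale_left_distrib)

interpretation P: vector_space SS by (rule vs_SS)

lemma SS_simp[simp]: "SS c (x, v) = (sc c x, scV c v)" by (simp add: sum_scale_def)

lemma sub_SG: "P.subspace (SG g)"
  unfolding P.subspace_def sum_grading_def
  by (auto simp: A.inadd V.inadd A.inscale V.inscale sum_scale_def zero_prod_def)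

lemma hcomp_pair: "is_decomp SG p (\<lambda>g. (hcomp Ag (fst p) g, hcomp Vg (snd p) g))"
proof -
  let ?f = "\<lambda>g. (hcomp Ag (fst p) g, hcomp Vg (snd p) g)"
  let ?S = "{g. ?f g \<noteq> 0}"
  have sub: "?S \<subseteq> hsupp Ag (fst p) \<union> hsupp Vg (snd p)" by (auto simp: hsupp_def zero_prod_def)
  have fin: "finite ?S" using sub A.hsupp_finite V.hsupp_finite finite_subset by blast
  have s1: "fst p = sum (hcomp Ag (fst p)) ?S" by (rule A.hcomp_sum[OF fin]) (auto simp: hsupp_def zero_prod_def)
  have s2: "snd p = sum (hcomp Vg (snd p)) ?S" by (rule V.hcomp_sum[OF fin]) (auto simp: hsupp_def zero_prod_def)
  have "p = sum ?f ?S"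
    by (simp add: sum_prod s1[symmetric] s2[symmetric])
  then show ?thesis unfolding is_decomp_def sum_grading_def
    using fin by (auto simp: A.hcomp_in V.hcomp_in)
qed

lemma decomp_pair_unique:
  assumes d: "is_decomp SG p f"
  shows "f = (\<lambda>g. (hcomp Ag (fst p) g, hcomp Vg (snd p) g))"
proof -
  let ?S = "{g. f g \<noteq> 0}"
  have fin: "finite ?S" and mem: "\<And>g. f g \<in> SG g" and ps: "p = sum f ?S"
    using d unfolding is_decomp_def by auto
  have "is_decomp Ag (fst p) (\<lambda>g. fst (f g))"
  proof (rule A.decomp_intro[OF fin])
    show "\<And>g. g \<notin> ?S \<Longrightarrow> fst (f g) = 0" by simp
    show "\<And>g. fst (f g) \<in> Ag g" using mem by (auto simp: sum_grading_def mem_Times_iff)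
    show "fst p = (\<Sum>g\<in>?S. fst (f g))" using ps fst_sum by metis
  qed
  then have h1: "hcomp Ag (fst p) = (\<lambda>g. fst (f g))" by (rule A.hcomp_unique)
  have "is_decomp Vg (snd p) (\<lambda>g. snd (f g))"
  proof (rule V.decomp_intro[OF fin])
    show "\<And>g. g \<notin> ?S \<Longrightarrow> snd (f g) = 0" by simp
    show "\<And>g. snd (f g) \<in> Vg g" using mem by (auto simp: sum_grading_def mem_Times_iff)
    show "snd p = (\<Sum>g\<in>?S. snd (f g))" using ps snd_sum by metis
  qed
  then have h2: "hcomp Vg (snd p) = (\<lambda>g. snd (f g))" by (rule V.hcomp_unique)
  show ?thesis by (simp add: h1 h2)
qed

lemma gvs_SS: "graded_vs SS SG"
  unfolding graded_vs_def
  using vs_SS sub_SG hcomp_pair decomp_pair_unique by blast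

lemma MM_def2: "MM p q = (m (fst p) (fst q), mu (fst p) (snd q) + tw mu (fst q) (snd p))"
  by (simp add: semidirect_mul_def)
lemma BB_def2: "BB p q = (br (fst p) (fst q), rho (fst p) (snd q) - tw rho (fst q) (snd p))"
  by (simp add: semidirect_br_def)

lemmas tw_mu = twist_add1[OF mu_la] twist_add2[OF mu_la] twist_scale1[OF mu_la] twist_scale2[OF mu_la]
lemmas tw_rho = twist_add1[OF rho_la] twist_add2[OF rho_la] twist_scale1[OF rho_la] twist_scale2[OF rho_la]

lemma MM_addL: "MM (p + p') q = MM p q + MM p' q"
  by (simp add: MM_def2 m_facts mu_facts tw_mu algebra_simps)
lemma MM_addR: "MM p (q + q') = MM p q + MM p q'"
  by (simp add: MM_def2 m_facts mu_facts tw_mu algebra_simps)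
lemma MM_scL: "MM (SS c p) q = SS c (MM p q)"
  by (simp add: MM_def2 sum_scale_def m_facts mu_facts tw_mu V.scale_right_distrib)
lemma MM_scR: "MM p (SS c q) = SS c (MM p q)"
  by (simp add: MM_def2 sum_scale_def m_facts mu_facts tw_mu V.scale_right_distrib)
lemma BB_addL: "BB (p + p') q = BB p q + BB p' q"
  by (simp add: BB_def2 br_facts rho_facts tw_rho algebra_simps)
lemma BB_addR: "BB p (q + q') = BB p q + BB p q'"
  by (simp add: BB_def2 br_facts rho_facts tw_rho algebra_simps)
lemma BB_scL: "BB (SS c p) q = SS c (BB p q)"
  by (simp add: BB_def2 sum_scale_def br_facts rho_facts tw_rho V.scale_right_diff_distrib)
lemma BB_scR: "BB p (SS c q) = SS c (BB p q)"
  by (simp add: BB_def2 sum_scale_def br_facts rho_facts tw_rho V.scale_right_diff_distrib)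

lemma MM_0L[simp]: "MM 0 q = 0" and MM_0R[simp]: "MM p 0 = 0"
  and BB_0L[simp]: "BB 0 q = 0" and BB_0R[simp]: "BB p 0 = 0"
  by (simp_all add: MM_def2 BB_def2 m_facts mu_facts br_facts rho_facts zero_prod_def)

lemma bil_MM: "bilinear_op SS MM"
  unfolding bilinear_op_def
  apply (intro conjI allI linI vs_SS) by (simp_all only: MM_addL MM_addR MM_scL MM_scR)
lemma bil_BB: "bilinear_op SS BB"
  unfolding bilinear_op_def
  apply (intro conjI allI linI vs_SS) by (simp_all only: BB_addL BB_addR BB_scL BB_scR)

lemma tw_mu_hom: "x \<in> Ag b \<Longrightarrow> v \<in> Vg a \<Longrightarrow> tw mu x v = scV (eps a b) (mu x v)"
  by (rule twist_hom[OF mu_la])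
lemma tw_rho_hom: "x \<in> Ag b \<Longrightarrow> v \<in> Vg a \<Longrightarrow> tw rho x v = scV (eps a b) (rho x v)"
  by (rule twist_hom[OF rho_la])

lemma gr_MM: "graded_op SG MM"
  unfolding graded_op_def sum_grading_def
proof (intro allI impI)
  fix a b p q assume p: "p \<in> Ag a \<times> Vg a" and q: "q \<in> Ag b \<times> Vg b"
  have "mu (fst p) (snd q) \<in> Vg (a + b)" using mu_gr[of "fst p" a "snd q" b] p q by (auto simp: add.commute)
  moreover have "tw mu (fst q) (snd p) \<in> Vg (a + b)" using p q
    by (auto simp: tw_mu_hom mu_gr V.inscale)
  ultimately show "MM p q \<in> Ag (a + b) \<times> Vg (a + b)" using p q
    by (auto simp: MM_def2 m_gr V.inadd)
qed

lemma gr_BB: "graded_op SG BB"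
  unfolding graded_op_def sum_grading_def
proof (intro allI impI)
  fix a b p q assume p: "p \<in> Ag a \<times> Vg a" and q: "q \<in> Ag b \<times> Vg b"
  have "rho (fst p) (snd q) \<in> Vg (a + b)" using rho_gr[of "fst p" a "snd q" b] p q by (auto simp: add.commute)
  moreover have "tw rho (fst q) (snd p) \<in> Vg (a + b)" using p q
    by (auto simp: tw_rho_hom rho_gr V.inscale)
  ultimately show "BB p q \<in> Ag (a + b) \<times> Vg (a + b)" using p q
    by (auto simp: BB_def2 br_gr V.indiff)
qed

lemma sum_closed:
  assumes "Q 0" "\<And>p q. Q p \<Longrightarrow> Q q \<Longrightarrow> Q (p + q)" "finite F" "\<And>i. i \<in> F \<Longrightarrow> Q (f i)"
  shows "Q (sum f F)"
  using assms(3,4) by (induction F rule: finite_induct) (auto simp: assms(1,2))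

lemma hom_induct:
  assumes z: "Q 0" and ad: "\<And>p q. Q p \<Longrightarrow> Q q \<Longrightarrow> Q (p + q)"
    and hA: "\<And>g x. x \<in> Ag g \<Longrightarrow> Q (x, 0)" and hV: "\<And>g v. v \<in> Vg g \<Longrightarrow> Q (0, v)"
  shows "Q p"
proof -
  obtain x v where p: "p = (x, v)" by fastforce
  have "(x, 0) = (\<Sum>g\<in>hsupp Ag x. (hcomp Ag x g, 0))"
    using A.hcomp_sum[OF A.hsupp_finite order_refl, of x] by (simp add: sum_prod)
  moreover have "Q (\<Sum>g\<in>hsupp Ag x. (hcomp Ag x g, 0::'v))"
    by (rule sum_closed[of Q], rule z, erule (1) ad, rule A.hsupp_finite, rule hA[OF A.hcomp_in])
  ultimately have 1: "Q (x, 0)" by metis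
  have "(0, v) = (\<Sum>g\<in>hsupp Vg v. (0, hcomp Vg v g))"
    using V.hcomp_sum[OF V.hsupp_finite order_refl, of v] by (simp add: sum_prod)
  moreover have "Q (\<Sum>g\<in>hsupp Vg v. (0::'a, hcomp Vg v g))"
    by (rule sum_closed[of Q], rule z, erule (1) ad, rule V.hsupp_finite, rule hV[OF V.hcomp_in])
  ultimately have 2: "Q (0, v)" by metis
  have "p = (x, 0) + (0, v)" by (simp add: p)
  then show ?thesis using ad[OF 1 2] by simp
qed

lemma hom2:
  assumes p: "p \<in> SG a" and ad: "\<And>p q. Q p \<Longrightarrow> Q q \<Longrightarrow> Q (p + q)"
    and hA: "\<And>x. x \<in> Ag a \<Longrightarrow> Q (x, 0)" and hV: "\<And>v. v \<in> Vg a \<Longrightarrow> Q (0, v)"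
  shows "Q p"
proof -
  obtain x v where pp: "p = (x, v)" by fastforce
  have "x \<in> Ag a" "v \<in> Vg a" using p pp by (auto simp: sum_grading_def)
  then have "Q ((x, 0) + (0, v))" using ad hA hV by blast
  then show ?thesis by (simp add: pp)
qed

lemma MM_AA[simp]: "MM (x, 0) (y, 0) = (m x y, 0)"
  and MM_AV[simp]: "MM (x, 0) (0, v) = (0, mu x v)"
  and MM_VV[simp]: "MM (0, u) (0, v) = (0, 0)"
  and MM_VA: "MM (0, u) (y, 0) = (0, tw mu y u)"
  and BB_AA[simp]: "BB (x, 0) (y, 0) = (br x y, 0)"
  and BB_AV[simp]: "BB (x, 0) (0, v) = (0, rho x v)"
  and BB_VV[simp]: "BB (0, u) (0, v) = (0, 0)"
  and BB_VA: "BB (0, u) (y, 0) = (0, - tw rho y u)"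
  by (simp_all add: MM_def2 BB_def2 m_facts mu_facts br_facts rho_facts)

lemma SS_0[simp]: "SS c 0 = 0" by (simp add: sum_scale_def zero_prod_def)

end



context smc begin

interpretation P: vector_space SS by (rule vs_SS)

lemma tw_neg2: "linear_action sc scV r \<Longrightarrow> tw r x (- v) = - tw r x v"
  using twist_add2[of r x v "-v"] by (simp add: eq_neg_iff_add_eq_0 add.commute)

lemmas tw_all = tw_mu tw_rho tw_neg2[OF mu_la] tw_neg2[OF rho_la]

lemma P_gr: "x \<in> Ag a \<Longrightarrow> y \<in> Ag b \<Longrightarrow> z \<in> Ag c \<Longrightarrow> Pfun sc eps m br a b x y z \<in> Ag (a + b + c)"
proof -
  assume x: "x \<in> Ag a" and y: "y \<in> Ag b" and z: "z \<in> Ag c"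
  have 1: "br x (m y z) \<in> Ag (a + b + c)" using br_gr[OF x m_gr[OF y z]] by (simp add: add.assoc)
  have 2: "m (br x y) z \<in> Ag (a + b + c)" using m_gr[OF br_gr[OF x y] z] by simp
  have 3: "m y (br x z) \<in> Ag (a + b + c)" using m_gr[OF y br_gr[OF x z]] by (simp add: add_ac)
  show ?thesis unfolding Pfun_def using 1 2 3 by (intro A.indiff A.inscale)
qed

lemma Sop_scale: "Sop scV eps m rho mu b c y z (scV k v) = scV k (Sop scV eps m rho mu b c y z v)"
  by (simp add: Sop_def mu_facts rho_facts V.scale_right_distrib V.scale_right_diff_distrib V.scale_left_commute[of _ k])

lemma Rop_scale: "Rop scV eps br rho mu b c y z (scV k v) = scV k (Rop scV eps br rho mu b c y z v)"
  by (simp add: Rop_def mu_facts rho_facts V.scale_right_distrib V.scale_right_diff_distrib V.scale_left_commute[of _ k])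

lemma PAAA: "Pfun SS eps MM BB a b (x, 0) (y, 0) (w, 0) = (Pfun sc eps m br a b x y w, 0)"
  by (simp add: Pfun_def)

lemma PAAV: "Pfun SS eps MM BB b c (y, 0) (z, 0) (0, v) = (0, Rop scV eps br rho mu b c y z v)"
  by (simp add: Pfun_def Rop_def)

lemma PVAA:
  assumes u: "u \<in> Vg e" and z: "z \<in> Ag c" and w: "w \<in> Ag d"
  shows "Pfun SS eps MM BB e c (0, u) (z, 0) (w, 0) = (0, scV (eps e (c + d)) (Sop scV eps m rho mu c d z w u))"
proof -
  have t1: "tw rho (m z w) u = scV (eps e (c + d)) (rho (m z w) u)" by (rule tw_rho_hom[OF m_gr[OF z w] u])
  have t2: "tw rho z u = scV (eps e c) (rho z u)" by (rule tw_rho_hom[OF z u])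
  have t3: "tw mu w (rho z u) = scV (eps (e + c) d) (mu w (rho z u))" by (rule tw_mu_hom[OF w rho_gr[OF z u]])
  have t4: "tw rho w u = scV (eps e d) (rho w u)" by (rule tw_rho_hom[OF w u])
  show ?thesis
    by (simp add: Pfun_def MM_VA BB_VA t1 t2 t4 tw_all t3 Sop_def mu_facts rho_facts epsL epsR V.scale_right_distrib V.scale_right_diff_distrib mult_ac algebra_simps)
qed

lemma PAVA:
  assumes y: "y \<in> Ag b" and u: "u \<in> Vg c" and w: "w \<in> Ag d"
  shows "Pfun SS eps MM BB b c (y, 0) (0, u) (w, 0) = (0, scV (eps c d) (Rop scV eps br rho mu b d y w u))"
proof -
  have t1: "tw mu w u = scV (eps c d) (mu w u)" by (rule tw_mu_hom[OF w u])
  have t2: "tw mu w (rho y u) = scV (eps (c + b) d) (mu w (rho y u))" by (rule tw_mu_hom[OF w rho_gr[OF y u]])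
  have t3: "tw mu (br y w) u = scV (eps c (b + d)) (mu (br y w) u)" by (rule tw_mu_hom[OF br_gr[OF y w] u])
  have k: "eps b c * eps c (b + d) = eps c d"
    by (simp add: epsR mult.assoc[symmetric] eps_swap)
  show ?thesis
    apply (simp add: Pfun_def MM_VA BB_VA t1 t2 t3 tw_all Rop_def mu_facts rho_facts k)
    by (simp add: epsL epsR V.scale_right_distrib V.scale_right_diff_distrib mult_ac algebra_simps)
qed

end



context smc begin

interpretation P: vector_space SS by (rule vs_SS)

definition "Fid a b c x y z w \<longleftrightarrow>
  Pfun SS eps MM BB (a + b) c (MM x y) z w =
    MM x (Pfun SS eps MM BB b c y z w) + SS (eps a b) (MM y (Pfun SS eps MM BB a c x z w))"

lemma F_AAAA: "x \<in> Ag a \<Longrightarrow> y \<in> Ag b \<Longrightarrow> z \<in> Ag c \<Longrightarrow> Fid a b c (x, 0) (y, 0) (z, 0) (w, 0)"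
  unfolding Fid_def by (simp add: PAAA FA_id)

lemma F_AAAV: "x \<in> Ag a \<Longrightarrow> y \<in> Ag b \<Longrightarrow> z \<in> Ag c \<Longrightarrow> Fid a b c (x, 0) (y, 0) (z, 0) (0, v)"
  unfolding Fid_def by (simp add: PAAV R_ax)

lemma F_AAVA:
  assumes x: "x \<in> Ag a" and y: "y \<in> Ag b" and u: "u \<in> Vg c" and w: "w \<in> Ag d"
  shows "Fid a b c (x, 0) (y, 0) (0, u) (w, 0)"
  unfolding Fid_def
  by (simp add: PAVA[OF m_gr[OF x y] u w] PAVA[OF y u w] PAVA[OF x u w] R_ax[OF x y w]
      mu_facts V.scale_right_distrib mult.commute)

lemma F_VAAA:
  assumes u: "u \<in> Vg a" and y: "y \<in> Ag b" and z: "z \<in> Ag c" and w: "w \<in> Ag d"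
  shows "Fid a b c (0, u) (y, 0) (z, 0) (w, 0)"
proof -
  have t1: "tw mu y u = scV (eps a b) (mu y u)" by (rule tw_mu_hom[OF y u])
  have mem1: "scV (eps a b) (mu y u) \<in> Vg (a + b)" using mu_gr[OF y u] by (rule V.inscale)
  have Pm: "Pfun sc eps m br b c y z w \<in> Ag (b + c + d)" by (rule P_gr[OF y z w])
  have t2: "tw mu (Pfun sc eps m br b c y z w) u = scV (eps a (b + c + d)) (mu (Pfun sc eps m br b c y z w) u)"
    by (rule tw_mu_hom[OF Pm u])
  show ?thesis
    unfolding Fid_def MM_VA t1 PVAA[OF mem1 z w] PAAA PVAA[OF u z w] t2 P_ax[OF y z w]
    by (simp add: Sop_scale mu_facts V.scale_right_distrib V.scale_right_diff_distrib epsL epsR mult_ac)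
qed

lemma F_AVAA:
  assumes x: "x \<in> Ag a" and u: "u \<in> Vg b" and z: "z \<in> Ag c" and w: "w \<in> Ag d"
  shows "Fid a b c (x, 0) (0, u) (z, 0) (w, 0)"
proof -
  have mem1: "mu x u \<in> Vg (a + b)" using mu_gr[OF x u] by (simp add: add.commute)
  have Pm: "Pfun sc eps m br a c x z w \<in> Ag (a + c + d)" by (rule P_gr[OF x z w])
  have t2: "tw mu (Pfun sc eps m br a c x z w) u = scV (eps b (a + c + d)) (mu (Pfun sc eps m br a c x z w) u)"
    by (rule tw_mu_hom[OF Pm u])
  have k: "eps a b * eps b (a + c + d) = eps b (c + d)"
    by (simp add: epsR mult.assoc[symmetric] eps_swap)
  show ?thesis
    unfolding Fid_def
    apply (simp add: PVAA[OF mem1 z w] PVAA[OF u z w] PAAA MM_VA t2 P_ax[OF x z w] k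
       mu_facts V.scale_right_diff_distrib)
    by (simp add: Sop_scale mu_facts V.scale_right_distrib V.scale_right_diff_distrib epsL epsR mult_ac eps_swap)
qed

definition "pa a p \<longleftrightarrow> (\<exists>x\<in>Ag a. p = (x, 0)) \<or> (\<exists>v\<in>Vg a. p = (0, v))"

lemma F_pure: "pa a x \<Longrightarrow> pa b y \<Longrightarrow> pa c z \<Longrightarrow> pa d w \<Longrightarrow> Fid a b c x y z w"
  unfolding pa_def
  apply (elim disjE bexE; simp only:; ((rule F_AAAA F_AAAV F_AAVA F_VAAA F_AVAA; assumption); fail)?)
  by (simp_all add: Fid_def Pfun_def MM_VA BB_VA mu_facts rho_facts m_facts br_facts tw_all)

end



context smc begin

interpretation P: vector_space SS by (rule vs_SS)

lemma PP_add1: "Pfun SS eps MM BB a b (x + x') y z = Pfun SS eps MM BB a b x y z + Pfun SS eps MM BB a b x' y z"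
  by (simp add: Pfun_def MM_addL MM_addR BB_addL BB_addR P.scale_right_distrib algebra_simps)
lemma PP_add2: "Pfun SS eps MM BB a b x (y + y') z = Pfun SS eps MM BB a b x y z + Pfun SS eps MM BB a b x y' z"
  by (simp add: Pfun_def MM_addL MM_addR BB_addL BB_addR P.scale_right_distrib algebra_simps)
lemma PP_add3: "Pfun SS eps MM BB a b x y (z + z') = Pfun SS eps MM BB a b x y z + Pfun SS eps MM BB a b x y z'"
  by (simp add: Pfun_def MM_addL MM_addR BB_addL BB_addR P.scale_right_distrib algebra_simps)
lemma PP_0: "Pfun SS eps MM BB a b 0 y z = 0" "Pfun SS eps MM BB a b x 0 z = 0" "Pfun SS eps MM BB a b x y 0 = 0"
  by (simp_all add: Pfun_def)

lemma Fid_add1: "Fid a b c x y z w \<Longrightarrow> Fid a b c x' y z w \<Longrightarrow> Fid a b c (x + x') y z w"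
  unfolding Fid_def by (simp add: PP_add1 MM_addL MM_addR P.scale_right_distrib algebra_simps)
lemma Fid_add2: "Fid a b c x y z w \<Longrightarrow> Fid a b c x y' z w \<Longrightarrow> Fid a b c x (y + y') z w"
  unfolding Fid_def by (simp add: PP_add1 PP_add2 MM_addL MM_addR P.scale_right_distrib algebra_simps)
lemma Fid_add3: "Fid a b c x y z w \<Longrightarrow> Fid a b c x y z' w \<Longrightarrow> Fid a b c x y (z + z') w"
  unfolding Fid_def by (simp add: PP_add2 MM_addL MM_addR P.scale_right_distrib algebra_simps)
lemma Fid_add4: "Fid a b c x y z w \<Longrightarrow> Fid a b c x y z w' \<Longrightarrow> Fid a b c x y z (w + w')"
  unfolding Fid_def by (simp add: PP_add3 MM_addL MM_addR P.scale_right_distrib algebra_simps)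
lemma Fid_0: "Fid a b c x y z 0"
  unfolding Fid_def by (simp add: PP_0)

lemma pa_lift:
  assumes "p \<in> SG a" "\<And>p. pa a p \<Longrightarrow> Q p" "\<And>p q. Q p \<Longrightarrow> Q q \<Longrightarrow> Q (p + q)"
  shows "Q p"
  using assms(1) apply (rule hom2[of p a Q])
  using assms(2,3) unfolding pa_def by auto

lemma pa_lift_all:
  assumes "Q 0" "\<And>d p. pa d p \<Longrightarrow> Q p" "\<And>p q. Q p \<Longrightarrow> Q q \<Longrightarrow> Q (p + q)"
  shows "Q p"
  apply (rule hom_induct[of Q])
     apply (rule assms(1))
    apply (erule (1) assms(3))
   apply (rule assms(2), unfold pa_def, blast)+
  done

lemma F_all:
  assumes "x \<in> SG a" "y \<in> SG b" "z \<in> SG c"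
  shows "Fid a b c x y z w"
proof -
  have 1: "pa a x \<Longrightarrow> pa b y \<Longrightarrow> pa c z \<Longrightarrow> Fid a b c x y z w" for x y z w
    by (rule pa_lift_all[where Q="Fid a b c x y z"]) (auto intro: F_pure Fid_add4 Fid_0)
  have 2: "pa a x \<Longrightarrow> pa b y \<Longrightarrow> z \<in> SG c \<Longrightarrow> Fid a b c x y z w" for x y z w
    by (rule pa_lift[where Q="\<lambda>z. Fid a b c x y z w"]) (auto intro: 1 Fid_add3)
  have 3: "pa a x \<Longrightarrow> y \<in> SG b \<Longrightarrow> z \<in> SG c \<Longrightarrow> Fid a b c x y z w" for x y z w
    by (rule pa_lift[where Q="\<lambda>y. Fid a b c x y z w"]) (auto intro: 2 Fid_add2)
  show ?thesis
    by (rule pa_lift[where Q="\<lambda>x. Fid a b c x y z w"]) (auto intro: 3 Fid_add1 assms)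
qed

section \<open>associativity\<close>

definition "Aid p q r \<longleftrightarrow> MM (MM p q) r = MM p (MM q r)"

lemma A_VAA:
  assumes u: "u \<in> Vg a" and y: "y \<in> Ag b" and z: "z \<in> Ag c"
  shows "Aid (0, u) (y, 0) (z, 0)"
proof -
  have t1: "tw mu y u = scV (eps a b) (mu y u)" by (rule tw_mu_hom[OF y u])
  have t2: "tw mu z (mu y u) = scV (eps (a + b) c) (mu z (mu y u))" by (rule tw_mu_hom[OF z mu_gr[OF y u]])
  have t3: "tw mu (m y z) u = scV (eps a (b + c)) (mu (m y z) u)" by (rule tw_mu_hom[OF m_gr[OF y z] u])
  show ?thesis unfolding Aid_def
    by (simp add: MM_VA t1 t2 t3 tw_all mu_facts mu_mult mu_comm[OF y z] epsL epsR mult_ac)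
qed

lemma A_AVA:
  assumes x: "x \<in> Ag a" and v: "v \<in> Vg b" and z: "z \<in> Ag c"
  shows "Aid (x, 0) (0, v) (z, 0)"
proof -
  have t1: "tw mu z (mu x v) = scV (eps (b + a) c) (mu z (mu x v))" by (rule tw_mu_hom[OF z mu_gr[OF x v]])
  have t2: "tw mu z v = scV (eps b c) (mu z v)" by (rule tw_mu_hom[OF z v])
  show ?thesis unfolding Aid_def
    by (simp add: MM_VA t1 t2 tw_all mu_facts mu_comm[OF x z] epsL epsR mult_ac)
qed

lemma A_pure: "pa a x \<Longrightarrow> pa b y \<Longrightarrow> pa c z \<Longrightarrow> Aid x y z"
  unfolding pa_def
  apply (elim disjE bexE; simp only:; ((rule A_VAA A_AVA; assumption); fail)?)
  by (simp_all add: Aid_def MM_VA mu_facts m_facts tw_all m_assoc mu_mult)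

lemma Aid_add1: "Aid x y z \<Longrightarrow> Aid x' y z \<Longrightarrow> Aid (x + x') y z"
  and Aid_add2: "Aid x y z \<Longrightarrow> Aid x y' z \<Longrightarrow> Aid x (y + y') z"
  and Aid_add3: "Aid x y z \<Longrightarrow> Aid x y z' \<Longrightarrow> Aid x y (z + z')"
  and Aid_0: "Aid 0 y z" "Aid x 0 z" "Aid x y 0"
  unfolding Aid_def by (simp_all add: MM_addL MM_addR)

lemma A_all: "Aid x y z"
proof -
  have 1: "pa a x \<Longrightarrow> pa b y \<Longrightarrow> Aid x y z" for a b x y z
    by (rule pa_lift_all[where Q="Aid x y"]) (auto intro: A_pure Aid_add3 Aid_0)
  have 2: "pa a x \<Longrightarrow> Aid x y z" for a x y z
    by (rule pa_lift_all[where Q="\<lambda>y. Aid x y z"]) (auto intro: 1 Aid_add2 Aid_0)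
  show ?thesis
    by (rule pa_lift_all[where Q="\<lambda>x. Aid x y z"]) (auto intro: 2 Aid_add1 Aid_0)
qed

section \<open>commutativity and antisymmetry\<close>

definition "Cid a b p q \<longleftrightarrow> MM p q = SS (eps a b) (MM q p)"
definition "Nid a b p q \<longleftrightarrow> BB p q = - SS (eps a b) (BB q p)"

lemma C_pure: "pa a x \<Longrightarrow> pa b y \<Longrightarrow> Cid a b x y"
proof -
  have AV: "Cid a b (x, 0) (0, v)" if x: "x \<in> Ag a" and v: "v \<in> Vg b" for x v
    unfolding Cid_def by (simp add: MM_VA tw_mu_hom[OF x v] eps_swap)
  have VA: "Cid a b (0, u) (y, 0)" if u: "u \<in> Vg a" and y: "y \<in> Ag b" for u y
    unfolding Cid_def by (simp add: MM_VA tw_mu_hom[OF y u])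
  have AA: "Cid a b (x, 0) (y, 0)" if x: "x \<in> Ag a" and y: "y \<in> Ag b" for x y
    unfolding Cid_def by (simp add: m_comm[OF x y])
  show "pa a x \<Longrightarrow> pa b y \<Longrightarrow> Cid a b x y"
    unfolding pa_def
    apply (elim disjE bexE; simp only:; ((rule AV VA AA; assumption); fail)?)
    by (simp add: Cid_def)
qed

lemma N_pure: "pa a x \<Longrightarrow> pa b y \<Longrightarrow> Nid a b x y"
proof -
  have AV: "Nid a b (x, 0) (0, v)" if x: "x \<in> Ag a" and v: "v \<in> Vg b" for x v
    unfolding Nid_def by (simp add: BB_VA tw_rho_hom[OF x v] eps_swap)
  have VA: "Nid a b (0, u) (y, 0)" if u: "u \<in> Vg a" and y: "y \<in> Ag b" for u y
    unfolding Nid_def by (simp add: BB_VA tw_rho_hom[OF y u])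
  have AA: "Nid a b (x, 0) (y, 0)" if x: "x \<in> Ag a" and y: "y \<in> Ag b" for x y
    unfolding Nid_def by (simp add: br_anti[OF x y])
  show "pa a x \<Longrightarrow> pa b y \<Longrightarrow> Nid a b x y"
    unfolding pa_def
    apply (elim disjE bexE; simp only:; ((rule AV VA AA; assumption); fail)?)
    by (simp add: Nid_def)
qed

lemma C_all: "x \<in> SG a \<Longrightarrow> y \<in> SG b \<Longrightarrow> Cid a b x y"
proof -
  assume x: "x \<in> SG a" and y: "y \<in> SG b"
  have 1: "pa a x \<Longrightarrow> Cid a b x y" for x
    by (rule pa_lift[where Q="Cid a b x", OF y])
      (erule C_pure, assumption, simp add: Cid_def MM_addL MM_addR P.scale_right_distrib)
  show ?thesis
    by (rule pa_lift[where Q="\<lambda>x. Cid a b x y", OF x])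
      (erule 1, simp add: Cid_def MM_addL MM_addR P.scale_right_distrib)
qed

lemma N_all: "x \<in> SG a \<Longrightarrow> y \<in> SG b \<Longrightarrow> Nid a b x y"
proof -
  assume x: "x \<in> SG a" and y: "y \<in> SG b"
  have 1: "pa a x \<Longrightarrow> Nid a b x y" for x
    by (rule pa_lift[where Q="Nid a b x", OF y])
      (erule N_pure, assumption, simp add: Nid_def BB_addL BB_addR P.scale_right_distrib)
  show ?thesis
    by (rule pa_lift[where Q="\<lambda>x. Nid a b x y", OF x])
      (erule 1, simp add: Nid_def BB_addL BB_addR P.scale_right_distrib)
qed

section \<open>Jacobi\<close>

lemma sum3: "(A1::'b::ab_group_add) + A2 + A3 = 0 \<Longrightarrow> B1 + B2 + B3 = 0 \<Longrightarrow> (A1 + B1) + (A2 + B2) + (A3 + B3) = 0"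
proof -
  assume h: "A1 + A2 + A3 = 0" "B1 + B2 + B3 = 0"
  have "(A1 + B1) + (A2 + B2) + (A3 + B3) = (A1 + A2 + A3) + (B1 + B2 + B3)" by (simp add: algebra_simps)
  then show ?thesis using h by simp
qed

definition "Jid a b c x y z \<longleftrightarrow>
  SS (eps c a) (BB x (BB y z)) + SS (eps b c) (BB z (BB x y)) + SS (eps a b) (BB y (BB z x)) = 0"

lemma J_AAV:
  assumes x: "x \<in> Ag a" and y: "y \<in> Ag b" and v: "v \<in> Vg c"
  shows "Jid a b c (x, 0) (y, 0) (0, v)"
proof -
  have t1: "tw rho (br x y) v = scV (eps c (a + b)) (rho (br x y) v)" by (rule tw_rho_hom[OF br_gr[OF x y] v])
  have t2: "tw rho x v = scV (eps c a) (rho x v)" by (rule tw_rho_hom[OF x v])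
  have k: "eps b c * eps c (a + b) = eps c a"
    by (simp add: epsR mult.left_commute[of "eps b c"] eps_swap)
  show ?thesis unfolding Jid_def
    apply (simp add: BB_VA t1 t2 tw_all rho_facts rho_rep[OF x y] V.scale_right_diff_distrib mult.assoc[symmetric] k)
    by (simp add: algebra_simps mult_ac zero_prod_def)
qed

lemma J_AVA:
  assumes x: "x \<in> Ag a" and v: "v \<in> Vg b" and z: "z \<in> Ag c"
  shows "Jid a b c (x, 0) (0, v) (z, 0)"
proof -
  have t1: "tw rho z v = scV (eps b c) (rho z v)" by (rule tw_rho_hom[OF z v])
  have t2: "tw rho (br z x) v = scV (eps b (c + a)) (rho (br z x) v)" by (rule tw_rho_hom[OF br_gr[OF z x] v])
  have k: "eps a b * eps b (c + a) = eps b c"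
    by (simp add: epsR mult.left_commute[of "eps a b"] eps_swap)
  show ?thesis unfolding Jid_def
    apply (simp add: BB_VA t1 t2 tw_all rho_facts rho_rep[OF z x] V.scale_right_diff_distrib mult.assoc[symmetric] k)
    by (simp add: algebra_simps mult_ac zero_prod_def)
qed

lemma J_VAA:
  assumes u: "u \<in> Vg a" and y: "y \<in> Ag b" and z: "z \<in> Ag c"
  shows "Jid a b c (0, u) (y, 0) (z, 0)"
proof -
  have t1: "tw rho (br y z) u = scV (eps a (b + c)) (rho (br y z) u)" by (rule tw_rho_hom[OF br_gr[OF y z] u])
  have t2: "tw rho y u = scV (eps a b) (rho y u)" by (rule tw_rho_hom[OF y u])
  have k: "eps c a * eps a (b + c) = eps a b"
    by (simp add: epsR mult.left_commute[of "eps c a"] eps_swap)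
  show ?thesis unfolding Jid_def
    apply (simp add: BB_VA t1 t2 tw_all rho_facts rho_rep[OF y z] V.scale_right_diff_distrib mult.assoc[symmetric] k)
    by (simp add: algebra_simps mult_ac zero_prod_def)
qed

lemma J_pure: "pa a x \<Longrightarrow> pa b y \<Longrightarrow> pa c z \<Longrightarrow> Jid a b c x y z"
  unfolding pa_def
  apply (elim disjE bexE; simp only:; ((rule J_AAV J_AVA J_VAA; assumption); fail)?)
  by (simp_all add: Jid_def BB_VA rho_facts br_facts tw_all br_jac zero_prod_def)

lemma J_all:
  assumes x: "x \<in> SG a" and y: "y \<in> SG b" and z: "z \<in> SG c"
  shows "Jid a b c x y z"
proof -
  have 1: "pa a x \<Longrightarrow> pa b y \<Longrightarrow> Jid a b c x y z" for x y
    by (rule pa_lift[where Q="Jid a b c x y", OF z])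
      (erule J_pure, assumption+, unfold Jid_def BB_addL BB_addR P.scale_right_distrib, erule (1) sum3)
  have 2: "pa a x \<Longrightarrow> Jid a b c x y z" for x
    by (rule pa_lift[where Q="\<lambda>y. Jid a b c x y z", OF y])
      (erule 1, assumption, unfold Jid_def BB_addL BB_addR P.scale_right_distrib, erule (1) sum3)
  show ?thesis
    by (rule pa_lift[where Q="\<lambda>x. Jid a b c x y z", OF x])
      (erule 2, unfold Jid_def BB_addL BB_addR P.scale_right_distrib, erule (1) sum3)
qed

lemma main: "F_manifold_color SS SG eps MM BB"
  unfolding F_manifold_color_def eps_comm_assoc_def lie_color_def
  apply (intro conjI allI impI gvs_SS bil_MM bil_BB gr_MM gr_BB)
       apply (rule A_all[unfolded Aid_def])
      apply (erule (1) C_all[unfolded Cid_def])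
     apply (erule (1) N_all[unfolded Nid_def])
    apply (erule (2) J_all[unfolded Jid_def])
   apply (erule (2) F_all[unfolded Fid_def])
  done

end


theorem proposition3p5:
  fixes sc :: "'k::field_char_0 \<Rightarrow> 'a::ab_group_add \<Rightarrow> 'a"
    and scV :: "'k \<Rightarrow> 'v::ab_group_add \<Rightarrow> 'v"
    and Ag :: "'g::ab_group_add \<Rightarrow> 'a set"
    and Vg :: "'g \<Rightarrow> 'v set"
    and eps :: "'g \<Rightarrow> 'g \<Rightarrow> 'k"
    and m br :: "'a \<Rightarrow> 'a \<Rightarrow> 'a"
    and rho mu :: "'a \<Rightarrow> 'v \<Rightarrow> 'v"
  assumes "alg_closed_field TYPE('k)"
    and "skew_bichar eps"
    and "fin_dim sc" and "fin_dim scV"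
    and "F_manifold_color sc Ag eps m br"
    and "F_manifold_color_rep sc Ag eps m br scV Vg rho mu"
  shows "F_manifold_color (sum_scale sc scV) (sum_grading Ag Vg) eps
           (semidirect_mul scV Ag Vg eps m mu) (semidirect_br scV Ag Vg eps br rho)"
proof -
  have e: "eps_comm_assoc sc Ag eps m"
    using assms(5)[unfolded F_manifold_color_def] by (elim conjE) assumption
  have g1: "graded_vs sc Ag"
    using e[unfolded eps_comm_assoc_def] by (elim conjE) assumption
  have g2: "graded_vs scV Vg"
    using assms(6)[unfolded F_manifold_color_rep_def] by (elim conjE) assumption
  interpret smc sc Ag scV Vg eps m br rho mu
    by (intro smc.intro gvs.intro smc_axioms.intro g1 g2 assms(2) assms(5) assms(6))
  show ?thesis by (rule main)
qed

end
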